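(* Consider the single sampling experiment with inputs $p_A,q_A,p_B,q_B$ and $\Delta>0$, and let $B=\mathrm{Bad}_\Delta(\tau,\nu_A)\cup\mathrm{Bad}_\Delta(\tau,\nu_B)$ and $\gamma=\tau(B)$. Then: 1. Alice accepts with probability exactly $\frac{1}{|\mathcal{U}|2^\Delta}$, and so does Bob. 2. The probability that the experiment is accepted is at most $\frac{1}{|\mathcal{U}|2^{2\Delta}}$ and at least $\frac{1-\gamma}{|\mathcal{U}|2^{2\Delta}}$. 3. If the experiment is accepted with positive probability and $\tau'$ denotes the distribution of its output conditioned on it being accepted, then $|\tau-\tau'|\le\gamma$.
   Context: $\mathcal{U}$ is a finite set and $p_A,q_A,p_B,q_B:\mathcal{U}\to[0,1]$ are such that $\tau=p_Ap_B$, $\nu_A=p_Aq_A$, $\nu_B=p_Bq_B$ (pointwise products) are probability distributions on $\mathcal{U}$. Single sampling experiment with parameter $\Delta>0$: using shared randomness, sample $u$ uniformly from $\mathcal{U}$ and $\alpha,\beta$ independently and uniformly from $[0,2^\Delta]$. Alice accepts if $\alpha\le p_A(u)$ and $\beta\le2^\Delta q_A(u)$. Bob accepts if $\alpha\le2^\Delta q_B(u)$ and $\beta\le p_B(u)$. If both accept, the experiment is accepted and its output is $u$; otherwise the output is $\bot$. For distributions $\tau,\nu$ on $\mathcal{U}$, $\mathrm{Bad}_\Delta(\tau,\nu)=\{u\in\mathcal{U}: 2^\Delta\nu(u)<\tau(u)\}$. Statistical distance: $|\mu-\nu|=\max_{T\subseteq\mathcal{U}}(\mu(T)-\nu(T))$.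 *)

theory Defs
  imports "HOL-Probability.Probability"
begin

definition exp_space :: "'a set \<Rightarrow> real \<Rightarrow> ('a \<times> real \<times> real) measure" where
  "exp_space U \<Delta> = measure_pmf (pmf_of_set U) \<Otimes>\<^sub>M
     (uniform_measure lborel {0..2 powr \<Delta>} \<Otimes>\<^sub>M uniform_measure lborel {0..2 powr \<Delta>})"

definition alice_acc :: "real \<Rightarrow> ('a \<Rightarrow> real) \<Rightarrow> ('a \<Rightarrow> real) \<Rightarrow> ('a \<times> real \<times> real) set" where
  "alice_acc \<Delta> pA qA = {(u, \<alpha>, \<beta>). \<alpha> \<le> pA u \<and> \<beta> \<le> 2 powr \<Delta> * qA u}"

definition bob_acc :: "real \<Rightarrow> ('a \<Rightarrow> real) \<Rightarrow> ('a \<Rightarrow> real) \<Rightarrow> ('a \<times> real \<times> real) set" where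
  "bob_acc \<Delta> pB qB = {(u, \<alpha>, \<beta>). \<alpha> \<le> 2 powr \<Delta> * qB u \<and> \<beta> \<le> pB u}"

definition exp_acc :: "real \<Rightarrow> ('a \<Rightarrow> real) \<Rightarrow> ('a \<Rightarrow> real) \<Rightarrow> ('a \<Rightarrow> real) \<Rightarrow> ('a \<Rightarrow> real)
    \<Rightarrow> ('a \<times> real \<times> real) set" where
  "exp_acc \<Delta> pA qA pB qB = alice_acc \<Delta> pA qA \<inter> bob_acc \<Delta> pB qB"

text \<open>Output of the experiment: Some u if accepted, None (bottom) otherwise.\<close>
definition exp_output :: "real \<Rightarrow> ('a \<Rightarrow> real) \<Rightarrow> ('a \<Rightarrow> real) \<Rightarrow> ('a \<Rightarrow> real) \<Rightarrow> ('a \<Rightarrow> real)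
    \<Rightarrow> 'a \<times> real \<times> real \<Rightarrow> 'a option" where
  "exp_output \<Delta> pA qA pB qB \<omega> = (if \<omega> \<in> exp_acc \<Delta> pA qA pB qB then Some (fst \<omega>) else None)"

definition cond_output :: "'a set \<Rightarrow> real \<Rightarrow> ('a \<Rightarrow> real) \<Rightarrow> ('a \<Rightarrow> real) \<Rightarrow> ('a \<Rightarrow> real) \<Rightarrow> ('a \<Rightarrow> real)
    \<Rightarrow> 'a \<Rightarrow> real" where
  "cond_output U \<Delta> pA qA pB qB u =
     measure (exp_space U \<Delta>) {\<omega> \<in> space (exp_space U \<Delta>). exp_output \<Delta> pA qA pB qB \<omega> = Some u}
     / measure (exp_space U \<Delta>) (exp_acc \<Delta> pA qA pB qB)"

definition is_distr :: "'a set \<Rightarrow> ('a \<Rightarrow> real) \<Rightarrow> bool" where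
  "is_distr U \<mu> \<longleftrightarrow> (\<forall>u\<in>U. 0 \<le> \<mu> u) \<and> sum \<mu> U = 1"

definition Bad :: "'a set \<Rightarrow> real \<Rightarrow> ('a \<Rightarrow> real) \<Rightarrow> ('a \<Rightarrow> real) \<Rightarrow> 'a set" where
  "Bad U \<Delta> \<tau> \<nu> = {u \<in> U. 2 powr \<Delta> * \<nu> u < \<tau> u}"

definition stat_dist :: "'a set \<Rightarrow> ('a \<Rightarrow> real) \<Rightarrow> ('a \<Rightarrow> real) \<Rightarrow> real" where
  "stat_dist U \<mu> \<nu> = Max ((\<lambda>T. sum \<mu> T - sum \<nu> T) ` Pow U)"

end

theory Submission
  imports Defs
begin

lemma unif_Iic:
  fixes c a :: real
  assumes "0 \<le> a" "a \<le> c" "0 < c"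
  shows "emeasure (uniform_measure lborel {0..c}) {..a} = ennreal (a / c)"
proof -
  have "{0..c} \<inter> {..a} = {0..a}" using assms by auto
  then show ?thesis using assms
    by (simp add: divide_ennreal)
qed

lemma key:
  fixes U :: "'a set" and a b :: "'a \<Rightarrow> real" and \<Delta> :: real
  assumes U: "finite U" "U \<noteq> {}"
    and ab: "\<forall>u\<in>U. 0 \<le> a u \<and> a u \<le> 2 powr \<Delta> \<and> 0 \<le> b u \<and> b u \<le> 2 powr \<Delta>"
  shows "measure (exp_space U \<Delta>) {(u, \<alpha>, \<beta>). P u \<and> \<alpha> \<le> a u \<and> \<beta> \<le> b u}
       = (\<Sum>u\<in>{u\<in>U. P u}. a u * b u) / (card U * (2 powr \<Delta>)^2)"
proof -
  define c where "c = 2 powr \<Delta>"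
  have c: "0 < c" unfolding c_def by simp
  define V where "V = uniform_measure lborel {0..c}"
  have pV: "prob_space V" unfolding V_def
    by (rule prob_space_uniform_measure) (use c in auto)
  interpret V: prob_space V by (rule pV)
  interpret VV: prob_space "V \<Otimes>\<^sub>M V" by (intro prob_space_pair pV)
  define X where "X = {(u, \<alpha>, \<beta>). P u \<and> \<alpha> \<le> a u \<and> \<beta> \<le> b u}"
  have sV: "sets V = sets borel" unfolding V_def by simp
  have spV: "space V = UNIV" unfolding V_def by simp
  have meas: "X \<in> sets (measure_pmf (pmf_of_set U) \<Otimes>\<^sub>M (V \<Otimes>\<^sub>M V))"
  proof -
    have "X = {\<omega> \<in> space (measure_pmf (pmf_of_set U) \<Otimes>\<^sub>M (V \<Otimes>\<^sub>M V)).
       P (fst \<omega>) \<and> fst (snd \<omega>) \<le> a (fst \<omega>) \<and> snd (snd \<omega>) \<le> b (fst \<omega>)}"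
      unfolding X_def by (auto simp: space_pair_measure spV)
    also have "\<dots> \<in> sets (measure_pmf (pmf_of_set U) \<Otimes>\<^sub>M (V \<Otimes>\<^sub>M V))"
    proof -
      let ?K = "measure_pmf (pmf_of_set U) \<Otimes>\<^sub>M (V \<Otimes>\<^sub>M V)"
      have m1: "(\<lambda>x. a (fst x)) \<in> borel_measurable ?K"
        by (rule measurable_compose[OF measurable_fst]) simp
      have m2: "(\<lambda>x. b (fst x)) \<in> borel_measurable ?K"
        by (rule measurable_compose[OF measurable_fst]) simp
      have m0: "(\<lambda>x. P (fst x)) \<in> measurable ?K (count_space UNIV)"
        by (rule measurable_compose[OF measurable_fst]) simp
      have idV: "(\<lambda>x. x) \<in> borel_measurable V"
        by (simp add: measurable_cong_sets[OF sV refl])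
      have m3: "(\<lambda>x. fst (snd x)) \<in> borel_measurable ?K"
        by (rule measurable_compose[OF _ idV]) measurable
      have m4: "(\<lambda>x. snd (snd x)) \<in> borel_measurable ?K"
        by (rule measurable_compose[OF _ idV]) measurable
      have "Measurable.pred ?K (\<lambda>x. P (fst x))" using m0 by (simp add: pred_def)
      moreover have "Measurable.pred ?K (\<lambda>x. fst (snd x) \<le> a (fst x))"
        using m1 m3 by measurable
      moreover have "Measurable.pred ?K (\<lambda>x. snd (snd x) \<le> b (fst x))"
        using m2 m4 by measurable
      ultimately show ?thesis by measurable
    qed
    finally show ?thesis .
  qed
  have "emeasure (measure_pmf (pmf_of_set U) \<Otimes>\<^sub>M (V \<Otimes>\<^sub>M V)) X
     = (\<integral>\<^sup>+u. emeasure (V \<Otimes>\<^sub>M V) (Pair u -` X) \<partial>measure_pmf (pmf_of_set U))"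
    by (rule VV.emeasure_pair_measure_alt[OF meas])
  also have "\<dots> = (\<Sum>u\<in>U. emeasure (V \<Otimes>\<^sub>M V) (Pair u -` X)) / card U"
    using U by (simp add: nn_integral_pmf_of_set)
  also have "(\<Sum>u\<in>U. emeasure (V \<Otimes>\<^sub>M V) (Pair u -` X)) = (\<Sum>u\<in>U. ennreal (if P u then a u * b u / c^2 else 0))"
  proof (rule sum.cong[OF refl])
    fix u assume u: "u \<in> U"
    show "emeasure (V \<Otimes>\<^sub>M V) (Pair u -` X) = ennreal (if P u then a u * b u / c^2 else 0)"
    proof (cases "P u")
      case True
      have "Pair u -` X = {..a u} \<times> {..b u}" using True unfolding X_def by auto
      then have "emeasure (V \<Otimes>\<^sub>M V) (Pair u -` X) = emeasure V {..a u} * emeasure V {..b u}"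
        by (simp add: V.emeasure_pair_measure_Times sV)
      also have "\<dots> = ennreal (a u / c) * ennreal (b u / c)"
        unfolding V_def using ab u c by (simp add: unif_Iic c_def divide_ennreal)
      also have "\<dots> = ennreal (a u * b u / c^2)"
        using ab u c by (simp add: ennreal_mult[symmetric] power2_eq_square c_def)
      finally show ?thesis using True by simp
    next
      case False
      then have "Pair u -` X = {}" unfolding X_def by auto
      then show ?thesis using False by simp
    qed
  qed
  also have "\<dots> = ennreal (\<Sum>u\<in>U. if P u then a u * b u / c^2 else 0)"
    using ab by (intro sum_ennreal) auto
  finally have E: "emeasure (exp_space U \<Delta>) X = ennreal (\<Sum>u\<in>U. if P u then a u * b u / c^2 else 0) / card U"
    unfolding exp_space_def V_def c_def by simp
  have "(\<Sum>u\<in>U. if P u then a u * b u / c^2 else 0) = (\<Sum>u\<in>{u\<in>U. P u}. a u * b u) / c^2"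
    using U by (simp add: sum.If_cases sum_divide_distrib Int_def conj_commute)
  moreover have "0 \<le> (\<Sum>u\<in>{u\<in>U. P u}. a u * b u)" using ab by (intro sum_nonneg) auto
  ultimately show ?thesis unfolding X_def[symmetric]
    using E U c unfolding c_def
    by (simp add: measure_def divide_ennreal ennreal_of_nat_eq_real_of_nat card_gt_0_iff mult.commute)
qed


theorem claim4p1:
  fixes U :: "'a set" and pA qA pB qB :: "'a \<Rightarrow> real" and \<Delta> :: real
  assumes "finite U" and "U \<noteq> {}"
    and "\<forall>u\<in>U. 0 \<le> pA u \<and> pA u \<le> 1" and "\<forall>u\<in>U. 0 \<le> qA u \<and> qA u \<le> 1"
    and "\<forall>u\<in>U. 0 \<le> pB u \<and> pB u \<le> 1" and "\<forall>u\<in>U. 0 \<le> qB u \<and> qB u \<le> 1"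
    and "is_distr U (\<lambda>u. pA u * pB u)"
    and "is_distr U (\<lambda>u. pA u * qA u)"
    and "is_distr U (\<lambda>u. pB u * qB u)"
    and "\<Delta> > 0"
  defines "\<tau> \<equiv> (\<lambda>u. pA u * pB u)"
    and "\<nu>A \<equiv> (\<lambda>u. pA u * qA u)"
    and "\<nu>B \<equiv> (\<lambda>u. pB u * qB u)"
    and "M \<equiv> exp_space U \<Delta>"
  defines "\<gamma> \<equiv> sum \<tau> (Bad U \<Delta> \<tau> \<nu>A \<union> Bad U \<Delta> \<tau> \<nu>B)"
  shows "measure M (alice_acc \<Delta> pA qA) = 1 / (card U * 2 powr \<Delta>)
         \<and> measure M (bob_acc \<Delta> pB qB) = 1 / (card U * 2 powr \<Delta>)
         \<and> measure M (exp_acc \<Delta> pA qA pB qB) \<le> 1 / (card U * 2 powr (2 * \<Delta>))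
         \<and> (1 - \<gamma>) / (card U * 2 powr (2 * \<Delta>)) \<le> measure M (exp_acc \<Delta> pA qA pB qB)
         \<and> (measure M (exp_acc \<Delta> pA qA pB qB) > 0 \<longrightarrow>
              stat_dist U \<tau> (cond_output U \<Delta> pA qA pB qB) \<le> \<gamma>)"
  proof -
  define c where "c = 2 powr \<Delta>"
  have c1: "1 \<le> c" unfolding c_def using assms(10) by (intro ge_one_powr_ge_zero) auto
  have c0: "0 < c" using c1 by simp
  have c2: "2 powr (2 * \<Delta>) = c^2" unfolding c_def
    by (simp add: power2_eq_square powr_add[symmetric])
  have n0: "0 < real (card U)" using assms(1,2) by (simp add: card_gt_0_iff)
  have sumT: "sum \<tau> U = 1" and sumA: "sum \<nu>A U = 1" and sumB: "sum \<nu>B U = 1"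
    using assms(7,8,9) unfolding is_distr_def \<tau>_def \<nu>A_def \<nu>B_def by auto
  have rng: "\<And>u. u \<in> U \<Longrightarrow> 0 \<le> pA u \<and> pA u \<le> 1 \<and> 0 \<le> qA u \<and> qA u \<le> 1 \<and> 0 \<le> pB u \<and> pB u \<le> 1 \<and> 0 \<le> qB u \<and> qB u \<le> 1"
    using assms(3-6) by auto
  have "alice_acc \<Delta> pA qA = {(u, \<alpha>, \<beta>). True \<and> \<alpha> \<le> pA u \<and> \<beta> \<le> c * qA u}"
    unfolding alice_acc_def c_def by auto
  also have "measure M \<dots> = (\<Sum>u\<in>{u\<in>U. True}. pA u * (c * qA u)) / (card U * c^2)"
    unfolding M_def c_def
    by (rule key[OF assms(1,2)]) (use rng c1 in \<open>auto simp: c_def intro: order.trans\<close>)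
  also have "\<dots> = 1 / (card U * c)"
  proof -
    have "(\<Sum>u\<in>{u\<in>U. True}. pA u * (c * qA u)) = c * sum \<nu>A U"
      by (simp add: \<nu>A_def sum_distrib_left algebra_simps)
    then show ?thesis using sumA c0 n0 by (simp add: power2_eq_square)
  qed
  finally have PA: "measure M (alice_acc \<Delta> pA qA) = 1 / (card U * 2 powr \<Delta>)" by (simp add: c_def)
  have "bob_acc \<Delta> pB qB = {(u, \<alpha>, \<beta>). True \<and> \<alpha> \<le> c * qB u \<and> \<beta> \<le> pB u}"
    unfolding bob_acc_def c_def by auto
  also have "measure M \<dots> = (\<Sum>u\<in>{u\<in>U. True}. (c * qB u) * pB u) / (card U * c^2)"
    unfolding M_def c_def
    by (rule key[OF assms(1,2)]) (use rng c1 in \<open>auto simp: c_def intro: order.trans\<close>)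
  also have "\<dots> = 1 / (card U * c)"
  proof -
    have "(\<Sum>u\<in>{u\<in>U. True}. (c * qB u) * pB u) = c * sum \<nu>B U"
      by (simp add: \<nu>B_def sum_distrib_left algebra_simps)
    then show ?thesis using sumB c0 n0 by (simp add: power2_eq_square)
  qed
  finally have PB: "measure M (bob_acc \<Delta> pB qB) = 1 / (card U * 2 powr \<Delta>)" by (simp add: c_def)
  define a where "a u = min (pA u) (c * qB u)" for u
  define b where "b u = min (c * qA u) (pB u)" for u
  define f where "f u = a u * b u" for u
  define S where "S = sum f U"
  have ab: "\<forall>u\<in>U. 0 \<le> a u \<and> a u \<le> 2 powr \<Delta> \<and> 0 \<le> b u \<and> b u \<le> 2 powr \<Delta>"
  proof
    fix u assume u: "u \<in> U"
    note r = rng[OF u]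
    have "a u \<le> pA u" "b u \<le> pB u" unfolding a_def b_def by auto
    moreover have "0 \<le> a u" "0 \<le> b u" using r c0 unfolding a_def b_def by auto
    ultimately show "0 \<le> a u \<and> a u \<le> 2 powr \<Delta> \<and> 0 \<le> b u \<and> b u \<le> 2 powr \<Delta>"
      using r c1 unfolding c_def[symmetric] by linarith
  qed
  have f0: "\<And>u. u \<in> U \<Longrightarrow> 0 \<le> f u" using ab unfolding f_def by auto
  have fle: "\<And>u. u \<in> U \<Longrightarrow> f u \<le> \<tau> u"
    unfolding f_def \<tau>_def using ab
    by (intro mult_mono) (auto simp: a_def b_def)
  have Bsub: "Bad U \<Delta> \<tau> \<nu>A \<union> Bad U \<Delta> \<tau> \<nu>B \<subseteq> U" unfolding Bad_def by auto
  have feq: "f u = \<tau> u" if u: "u \<in> U - (Bad U \<Delta> \<tau> \<nu>A \<union> Bad U \<Delta> \<tau> \<nu>B)" for u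
  proof (cases "pA u = 0 \<or> pB u = 0")
    case True
    then have "\<tau> u = 0" unfolding \<tau>_def by auto
    moreover have "u \<in> U" using u by simp
    ultimately show ?thesis using f0[of u] fle[of u] by linarith
  next
    case False
    then have pos: "0 < pA u" "0 < pB u" using rng u by force+
    have "\<tau> u \<le> c * \<nu>A u" "\<tau> u \<le> c * \<nu>B u" using u unfolding Bad_def c_def by auto
    then have h1: "pA u * pB u \<le> pA u * (c * qA u)" and h2: "pA u * pB u \<le> pB u * (c * qB u)"
      unfolding \<tau>_def \<nu>A_def \<nu>B_def by (auto simp: algebra_simps)
    have "pB u \<le> c * qA u" using h1 pos by simp
    moreover have "pA u \<le> c * qB u" using h2 pos by (simp add: mult.commute)
    ultimately show ?thesis unfolding f_def a_def b_def \<tau>_def by simp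
  qed
  have acc_eq: "exp_acc \<Delta> pA qA pB qB = {(u, \<alpha>, \<beta>). True \<and> \<alpha> \<le> a u \<and> \<beta> \<le> b u}"
    unfolding exp_acc_def alice_acc_def bob_acc_def a_def b_def c_def by auto
  have PAB: "measure M (exp_acc \<Delta> pA qA pB qB) = S / (card U * c^2)"
    unfolding acc_eq M_def S_def f_def using key[OF assms(1,2) ab, of "\<lambda>_. True"] by (simp add: c_def)
  have Sle: "S \<le> 1" unfolding S_def using sumT fle by (metis sum_mono)
  have Sge: "1 - \<gamma> \<le> S"
  proof -
    let ?B = "Bad U \<Delta> \<tau> \<nu>A \<union> Bad U \<Delta> \<tau> \<nu>B"
    have fin: "finite ?B" using Bsub assms(1) finite_subset by blast
    have "1 - \<gamma> = sum \<tau> (U - ?B)" unfolding \<gamma>_def using sumT Bsub assms(1)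
      by (simp add: sum_diff)
    also have "\<dots> = sum f (U - ?B)" using feq by simp
    also have "\<dots> \<le> S" unfolding S_def using f0 assms(1) by (intro sum_mono2) auto
    finally show ?thesis .
  qed
  have P3: "measure M (exp_acc \<Delta> pA qA pB qB) \<le> 1 / (card U * 2 powr (2 * \<Delta>))"
    unfolding PAB c2 using Sle n0 c0 by (simp add: divide_right_mono)
  have P4: "(1 - \<gamma>) / (card U * 2 powr (2 * \<Delta>)) \<le> measure M (exp_acc \<Delta> pA qA pB qB)"
    unfolding PAB c2 using Sge n0 c0 by (simp add: divide_right_mono)
  have P5: "stat_dist U \<tau> (cond_output U \<Delta> pA qA pB qB) \<le> \<gamma>"
    if pos: "measure M (exp_acc \<Delta> pA qA pB qB) > 0"
  proof -
    let ?B = "Bad U \<Delta> \<tau> \<nu>A \<union> Bad U \<Delta> \<tau> \<nu>B"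
    have S0: "0 < S" using pos unfolding PAB using n0 c0
      by (simp add: zero_less_divide_iff) (metis not_less_iff_gr_or_eq mult_pos_pos of_nat_0_less_iff zero_less_power)
    have co: "cond_output U \<Delta> pA qA pB qB u = f u / S" if u: "u \<in> U" for u
    proof -
      have sp: "space (exp_space U \<Delta>) = UNIV" unfolding exp_space_def
        by (simp add: space_pair_measure)
      have "{\<omega> \<in> space (exp_space U \<Delta>). exp_output \<Delta> pA qA pB qB \<omega> = Some u}
          = {(u', \<alpha>, \<beta>). u' = u \<and> \<alpha> \<le> a u' \<and> \<beta> \<le> b u'}"
        unfolding sp exp_output_def acc_eq by auto
      moreover have "measure (exp_space U \<Delta>) {(u', \<alpha>, \<beta>). u' = u \<and> \<alpha> \<le> a u' \<and> \<beta> \<le> b u'}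
          = f u / (card U * c^2)"
      proof -
        have "{u' \<in> U. u' = u} = {u}" using u by auto
        then show ?thesis using key[OF assms(1,2) ab, of "\<lambda>u'. u' = u"] by (simp add: c_def f_def)
      qed
      ultimately show ?thesis unfolding cond_output_def using PAB[unfolded M_def] n0 c0
        by simp
    qed
    have "\<forall>T\<in>Pow U. sum \<tau> T - sum (cond_output U \<Delta> pA qA pB qB) T \<le> \<gamma>"
    proof
      fix T assume "T \<in> Pow U"
      then have T: "T \<subseteq> U" by auto
      have finT: "finite T" using T assms(1) finite_subset by blast
      have "sum \<tau> T - sum (cond_output U \<Delta> pA qA pB qB) T = (\<Sum>u\<in>T. \<tau> u - f u / S)"
        using T co by (simp add: sum_subtractf subset_eq)
      also have "\<dots> \<le> (\<Sum>u\<in>T. if u \<in> ?B then \<tau> u else 0)"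
      proof (rule sum_mono)
        fix u assume "u \<in> T"
        then have u: "u \<in> U" using T by auto
        show "\<tau> u - f u / S \<le> (if u \<in> ?B then \<tau> u else 0)"
        proof (cases "u \<in> ?B")
          case True then show ?thesis using f0[OF u] S0 by simp
        next
          case False
          then have e: "f u = \<tau> u" using feq u by auto
          have t0: "0 \<le> \<tau> u" using rng[OF u] unfolding \<tau>_def by simp
          have "\<tau> u \<le> \<tau> u / S" using t0 S0 Sle
            by (simp add: le_divide_eq mult_left_le)
          then show ?thesis using False e by simp
        qed
      qed
      also have "\<dots> = sum \<tau> (T \<inter> ?B)" using finT by (simp add: sum.inter_restrict)
      also have "\<dots> \<le> \<gamma>" unfolding \<gamma>_def
        using Bsub assms(1) rng unfolding \<tau>_def
        by (intro sum_mono2) (auto intro: finite_subset)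
      finally show "sum \<tau> T - sum (cond_output U \<Delta> pA qA pB qB) T \<le> \<gamma>" .
    qed
    then show ?thesis unfolding stat_dist_def using assms(1)
      by (subst Max_le_iff) auto
  qed
  show ?thesis using PA PB P3 P4 P5 by blast
qed

end
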